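(* Let $\epsilon>0$. For every $\sigma^2>\sigma^*(\epsilon)^2$ there exists a real random variable $N^*$ with $\mathbb{E}[(N^* )^2]\le\sigma^2$ and some $\bar\epsilon<\epsilon$ such that the mechanism $a\mapsto a+N^*$ satisfies $\bar\epsilon$-DP, i.e., for all $a_0,a_1\in\mathbb{R}$ with $|a_0-a_1|\le1$ and every Borel set $\mathcal{B}\subseteq\mathbb{R}$, $\mathbb{P}(a_0+N^*\in\mathcal{B})\le e^{\bar\epsilon}\,\mathbb{P}(a_1+N^*\in\mathcal{B})$.
   Context: $\sigma^*(\epsilon)^2=\dfrac{2^{2/3}e^{-2\epsilon/3}(1+e^{-2\epsilon/3})+e^{-\epsilon}}{(1-e^{-\epsilon})^2}$. *)

theory Defs
  imports "HOL-Probability.Probability"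
begin

definition sigma_star_sq :: "real \<Rightarrow> real" where
  "sigma_star_sq \<epsilon> =
     (2 powr (2/3) * exp (-2*\<epsilon>/3) * (1 + exp (-2*\<epsilon>/3)) + exp (-\<epsilon>))
     / (1 - exp (-\<epsilon>))^2"

end

theory Submission
  imports Defs
begin

definition lev :: "real \<Rightarrow> real \<Rightarrow> nat" where "lev g x = nat (\<lfloor>\<bar>x\<bar> - g\<rfloor> + 1)"
definition stair :: "real \<Rightarrow> real \<Rightarrow> real \<Rightarrow> real" where "stair b g x = b ^ lev g x"

lemma stair_meas[measurable]: "stair b g \<in> borel_measurable borel"
  unfolding stair_def lev_def by measurable

lemma stair_slice:
  fixes k :: nat
  assumes "0 < g" "g < 1" "real k \<le> \<bar>x\<bar>" "\<bar>x\<bar> < real k + 1"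
  shows "stair b g x = b ^ k * (if \<bar>x\<bar> < real k + g then 1 else b)"
proof (cases "\<bar>x\<bar> < real k + g")
  case True
  then have "\<lfloor>\<bar>x\<bar> - g\<rfloor> = int k - 1" using assms by (intro floor_eq_iff[THEN iffD2]) auto
  then show ?thesis using True by (simp add: stair_def lev_def)
next
  case False
  then have "\<lfloor>\<bar>x\<bar> - g\<rfloor> = int k" using assms by (intro floor_eq_iff[THEN iffD2]) auto
  then have "lev g x = Suc k" by (simp add: lev_def nat_add_distrib)
  then show ?thesis using False by (simp add: stair_def)
qed

lemma stair_ratio:
  assumes "0 < b" "b < 1" "\<bar>x - y\<bar> \<le> 1" "g < 1"
  shows "stair b g x * b \<le> stair b g y"
proof -
  have "\<bar>y\<bar> - g \<le> (\<bar>x\<bar> - g) + 1" using assms by linarith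
  then have fl: "\<lfloor>\<bar>y\<bar> - g\<rfloor> \<le> \<lfloor>\<bar>x\<bar> - g\<rfloor> + 1"
    by (metis floor_add_int floor_mono of_int_1)
  have "\<lfloor>\<bar>x\<bar> - g\<rfloor> + 1 \<ge> 0" using assms(4) by linarith
  then have "lev g y \<le> lev g x + 1" unfolding lev_def using fl by (simp add: nat_le_iff)
  then have "b ^ (lev g x + 1) \<le> b ^ lev g y"
    using assms by (intro power_decreasing) auto
  then show ?thesis by (simp add: stair_def mult.commute)
qed

lemma summ1: "norm (x::real) < 1 \<Longrightarrow> summable (\<lambda>n. real (Suc n) * x ^ n)"
  using termdiff_converges[of x 1 "\<lambda>n. 1"] by (simp add: diffs_def summable_geometric)

lemma summ2: "norm (x::real) < 1 \<Longrightarrow> summable (\<lambda>n. (real (Suc n) * real (Suc (Suc n))) * x ^ n)"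
  using termdiff_converges[of x 1 "\<lambda>n. real (Suc n)"] summ1 by (simp add: diffs_def mult_ac)

lemma sums1:
  assumes "0 \<le> b" "b < 1"
  shows "(\<lambda>k. real k * b ^ k) sums (b / (1-b)^2)"
proof -
  have sm: "summable (\<lambda>k. real k * b ^ k)"
    by (rule summable_comparison_test[OF _ summ1[of b]]) (use assms in \<open>auto intro!: exI[of _ 0] mult_right_mono\<close>)
  define s where "s = (\<Sum>k. real k * b ^ k)"
  have s: "(\<lambda>k. real k * b ^ k) sums s" using sm s_def by (simp add: summable_sums)
  have g: "(\<lambda>k. b ^ k) sums (1/(1-b))" using geometric_sums[of b] assms by simp
  have "(\<lambda>k. b * (real k * b ^ k + b ^ k)) sums (b * (s + 1/(1-b)))"
    by (intro sums_mult sums_add s g)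
  moreover have "(\<lambda>k. b * (real k * b ^ k + b ^ k)) = (\<lambda>k. real (Suc k) * b ^ Suc k)"
    by (auto simp: algebra_simps)
  ultimately have "(\<lambda>k. real k * b ^ k) sums (b * (s + 1/(1-b)) + 0)"
    using sums_Suc_iff[of "\<lambda>k. real k * b ^ k"] by simp
  then have "s = b * (s + 1/(1-b))" using s sums_unique2 by fastforce
  then have "s * (1-b) = b/(1-b)" by (simp add: algebra_simps)
  moreover have nz: "1 - b \<noteq> 0" using assms by simp
  ultimately have "s = (b/(1-b))/(1-b)" by (metis nonzero_mult_div_cancel_right)
  then have "s = b / (1-b)^2" by (simp add: power2_eq_square)
  then show ?thesis using s by simp
qed

lemma sums2:
  assumes "0 \<le> b" "b < 1"
  shows "(\<lambda>k. (real k)^2 * b ^ k) sums (b * (1+b) / (1-b)^3)"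
proof -
  have sm: "summable (\<lambda>k. (real k)^2 * b ^ k)"
    by (rule summable_comparison_test[OF _ summ2[of b]]) (use assms in \<open>auto simp: power2_eq_square intro!: mult_mono\<close>)
  define s where "s = (\<Sum>k. (real k)^2 * b ^ k)"
  have s: "(\<lambda>k. (real k)^2 * b ^ k) sums s" using sm s_def by (simp add: summable_sums)
  have g: "(\<lambda>k. b ^ k) sums (1/(1-b))" using geometric_sums[of b] assms by simp
  have "(\<lambda>k. b * ((real k)^2 * b ^ k + 2 * (real k * b ^ k) + b ^ k)) sums (b * (s + 2 * (b / (1-b)^2) + 1/(1-b)))"
    by (intro sums_mult sums_add s g sums1 assms)
  moreover have "(\<lambda>k. b * ((real k)^2 * b ^ k + 2 * (real k * b ^ k) + b ^ k)) = (\<lambda>k. (real (Suc k))^2 * b ^ Suc k)"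
    by (auto simp: algebra_simps power2_eq_square)
  ultimately have "(\<lambda>k. (real k)^2 * b ^ k) sums (b * (s + 2 * (b / (1-b)^2) + 1/(1-b)) + 0)"
    using sums_Suc_iff[of "\<lambda>k. (real k)^2 * b ^ k"] by simp
  then have e: "s = b * (s + 2 * (b / (1-b)^2) + 1/(1-b))" using s sums_unique2 by fastforce
  have "s * (1 - b) = b * (2 * (b / (1-b)^2) + 1/(1-b))" using e by (simp add: algebra_simps)
  moreover have "b * (2 * (b / (1-b)^2) + 1/(1-b)) = b * (1+b) / (1-b)^2"
    using assms by (simp add: divide_simps) (simp add: algebra_simps power2_eq_square)
  ultimately have "s * (1 - b) = b * (1+b) / (1-b)^2" by simp
  moreover have nz: "1 - b \<noteq> 0" using assms by simp
  ultimately have "s = (b * (1+b) / (1-b)^2) / (1-b)" by (metis nonzero_mult_div_cancel_right)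
  also have "\<dots> = b * (1+b) / (1-b)^3" by (simp add: power3_eq_cube power2_eq_square)
  finally show ?thesis using s by simp
qed

lemma sym_int:
  fixes F p :: "real \<Rightarrow> real" and lo hi :: real
  assumes "0 \<le> lo" "lo \<le> hi"
    and D: "\<And>x. (F has_real_derivative p x) (at x)"
    and odd: "\<And>x. F (-x) = - F x" and even: "\<And>x. p (-x) = p x"
    and nn: "\<And>x. 0 \<le> p x"
  shows "(\<integral>\<^sup>+x. ennreal (p x) * indicator {x. lo \<le> \<bar>x\<bar> \<and> \<bar>x\<bar> < hi} x \<partial>lborel)
           = ennreal (2 * (F hi - F lo))"
proof -
  have h1: "(p has_integral (F hi - F lo)) {lo..hi}"
  proof (rule fundamental_theorem_of_calculus)
    show "lo \<le> hi" by fact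
    fix x assume "x \<in> {lo..hi}"
    show "(F has_vector_derivative p x) (at x within {lo..hi})"
      using D[of x] unfolding has_real_derivative_iff_has_vector_derivative
      by (rule has_vector_derivative_at_within)
  qed
  have D2: "((\<lambda>x. - F (-x)) has_real_derivative p x) (at x)" for x
  proof -
    have u: "((\<lambda>y. -y) has_real_derivative -1) (at x)" by (auto intro!: derivative_eq_intros)
    have "((\<lambda>x. F (-x)) has_real_derivative p (-x) * (-1)) (at x)"
      by (rule DERIV_chain2[where g="\<lambda>y. -y" and x=x, OF D[of "-x"] u])
    then have "((\<lambda>x. - F (-x)) has_real_derivative - (p (-x) * (-1))) (at x)"
      by (rule DERIV_minus)
    then show ?thesis using even[of x] by simp
  qed
  have h2: "(p has_integral (F hi - F lo)) {-hi..-lo}"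
  proof -
    have "(p has_integral ((- F (-(-lo))) - (- F (-(-hi))))) {-hi..-lo}"
    proof (rule fundamental_theorem_of_calculus)
      show "-hi \<le> -lo" using assms by simp
      fix x assume "x \<in> {-hi..-lo}"
      show "((\<lambda>x. - F (-x)) has_vector_derivative p x) (at x within {-hi..-lo})"
        using D2[of x] unfolding has_real_derivative_iff_has_vector_derivative
        by (rule has_vector_derivative_at_within)
    qed
    then show ?thesis by simp
  qed
  have h3: "(p has_integral (2 * (F hi - F lo))) ({lo..hi} \<union> {-hi..-lo})"
  proof -
    have "negligible ({lo..hi} \<inter> {-hi..-lo})"
      by (rule negligible_subset[of "{0}"]) (use assms in auto)
    from has_integral_Un[OF h1 h2 this] show ?thesis by simp
  qed
  have sub: "({lo..hi} \<union> {-hi..-lo}) - {x. lo \<le> \<bar>x\<bar> \<and> \<bar>x\<bar> < hi} \<subseteq> {hi, -hi}"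
  proof
    fix x assume x: "x \<in> ({lo..hi} \<union> {-hi..-lo}) - {x. lo \<le> \<bar>x\<bar> \<and> \<bar>x\<bar> < hi}"
    then have "lo \<le> \<bar>x\<bar>" "\<bar>x\<bar> \<le> hi" "\<not> \<bar>x\<bar> < hi" using assms by auto
    then show "x \<in> {hi, -hi}" by (cases "x \<ge> 0") auto
  qed
  have sub2: "{x. lo \<le> \<bar>x\<bar> \<and> \<bar>x\<bar> < hi} \<subseteq> {lo..hi} \<union> {-hi..-lo}"
    by (auto simp: abs_if split: if_splits)
  have h4: "(p has_integral (2 * (F hi - F lo))) {x. lo \<le> \<bar>x\<bar> \<and> \<bar>x\<bar> < hi}"
  proof (subst has_integral_spike_set_eq)
    show "negligible {x \<in> {x. lo \<le> \<bar>x\<bar> \<and> \<bar>x\<bar> < hi} - ({lo..hi} \<union> {-hi..-lo}). p x \<noteq> 0}"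
      by (rule negligible_subset[of "{}"]) (use sub2 in blast)+
    show "negligible {x \<in> ({lo..hi} \<union> {-hi..-lo}) - {x. lo \<le> \<bar>x\<bar> \<and> \<bar>x\<bar> < hi}. p x \<noteq> 0}"
      by (rule negligible_subset[of "{hi, -hi}"]) (use sub in blast)+
  qed (rule h3)
  show ?thesis
    by (rule nn_integral_has_integral_lebesgue'[OF _ h4]) (rule nn)
qed

lemma slice_int:
  fixes F q :: "real \<Rightarrow> real" and k :: nat
  assumes b: "0 < b" "b < 1" and g: "0 < g" "g < 1"
    and D: "\<And>x. (F has_real_derivative q x) (at x)"
    and odd: "\<And>x. F (-x) = - F x" and even: "\<And>x. q (-x) = q x"
    and nn: "\<And>x. 0 \<le> q x" and qm: "q \<in> borel_measurable borel"
  shows "(\<integral>\<^sup>+x. ennreal (q x * stair b g x) * indicator {x. real k \<le> \<bar>x\<bar> \<and> \<bar>x\<bar> < real k + 1} x \<partial>lborel)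
     = ennreal (b^k * (2*(F (real k + g) - F (real k))) + b^k*b*(2*(F (real k + 1) - F (real k + g))))"
proof -
  let ?T1 = "{x. real k \<le> \<bar>x\<bar> \<and> \<bar>x\<bar> < real k + g}"
  let ?T2 = "{x. real k + g \<le> \<bar>x\<bar> \<and> \<bar>x\<bar> < real k + 1}"
  have bk: "0 \<le> b^k" using b by simp
  have pw: "ennreal (q x * stair b g x) * indicator {x. real k \<le> \<bar>x\<bar> \<and> \<bar>x\<bar> < real k + 1} x
      = ennreal (b^k) * (ennreal (q x) * indicator ?T1 x) + ennreal (b^k*b) * (ennreal (q x) * indicator ?T2 x)" for x
  proof (cases "real k \<le> \<bar>x\<bar> \<and> \<bar>x\<bar> < real k + 1")
    case True
    have st: "stair b g x = b ^ k * (if \<bar>x\<bar> < real k + g then 1 else b)"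
      using stair_slice[of g k x b] g True by simp
    show ?thesis
    proof (cases "\<bar>x\<bar> < real k + g")
      case c: True
      then have "x \<in> ?T1" "x \<notin> ?T2" using True by auto
      moreover have "ennreal (q x * stair b g x) = ennreal (b^k) * ennreal (q x)"
        using st c bk nn[of x] by (simp add: ennreal_mult[symmetric] mult.commute)
      ultimately show ?thesis using True by simp
    next
      case c: False
      then have "x \<notin> ?T1" "x \<in> ?T2" using True by auto
      moreover have "ennreal (q x * stair b g x) = ennreal (b^k*b) * ennreal (q x)"
        using st c bk b nn[of x] by (simp add: ennreal_mult[symmetric] mult.commute)
      ultimately show ?thesis using True by simp
    qed
  next
    case False
    then have "x \<notin> ?T1" "x \<notin> ?T2" using g by auto
    then show ?thesis using False by simp
  qed
  have m1: "(\<lambda>x. ennreal (q x) * indicator ?T1 x) \<in> borel_measurable lborel" using qm by measurable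
  have m2: "(\<lambda>x. ennreal (q x) * indicator ?T2 x) \<in> borel_measurable lborel" using qm by measurable
  have "(\<integral>\<^sup>+x. ennreal (q x * stair b g x) * indicator {x. real k \<le> \<bar>x\<bar> \<and> \<bar>x\<bar> < real k + 1} x \<partial>lborel)
     = (\<integral>\<^sup>+x. ennreal (b^k) * (ennreal (q x) * indicator ?T1 x) + ennreal (b^k*b) * (ennreal (q x) * indicator ?T2 x) \<partial>lborel)"
    by (rule nn_integral_cong) (rule pw)
  also have "\<dots> = (\<integral>\<^sup>+x. ennreal (b^k) * (ennreal (q x) * indicator ?T1 x) \<partial>lborel) + (\<integral>\<^sup>+x. ennreal (b^k*b) * (ennreal (q x) * indicator ?T2 x) \<partial>lborel)"
    by (rule nn_integral_add) (use m1 m2 in simp_all)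
  also have "\<dots> = ennreal (b^k) * (\<integral>\<^sup>+x. ennreal (q x) * indicator ?T1 x \<partial>lborel) + ennreal (b^k*b) * (\<integral>\<^sup>+x. ennreal (q x) * indicator ?T2 x \<partial>lborel)"
    by (simp only: nn_integral_cmult[OF m1] nn_integral_cmult[OF m2])
  also have "(\<integral>\<^sup>+x. ennreal (q x) * indicator ?T1 x \<partial>lborel) = ennreal (2*(F (real k + g) - F (real k)))"
    by (rule sym_int[OF _ _ D odd even nn]) (use g in auto)
  also have "(\<integral>\<^sup>+x. ennreal (q x) * indicator ?T2 x \<partial>lborel) = ennreal (2*(F (real k + 1) - F (real k + g)))"
    by (rule sym_int[OF _ _ D odd even nn]) (use g in auto)
  also have "ennreal (b^k) * ennreal (2*(F (real k + g) - F (real k))) + ennreal (b^k*b) * ennreal (2*(F (real k + 1) - F (real k + g)))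
      = ennreal (b^k * (2*(F (real k + g) - F (real k))) + b^k*b*(2*(F (real k + 1) - F (real k + g))))"
  proof -
    have mono: "F u \<le> F v" if "u \<le> v" for u v
      using DERIV_nonneg_imp_nondecreasing[of u v F] that D nn by blast
    have "F (real k) \<le> F (real k + g)" by (rule mono) (use g in simp)
    moreover have "F (real k + g) \<le> F (real k + 1)" by (rule mono) (use g in simp)
    ultimately have m1: "0 \<le> 2*(F (real k + g) - F (real k))" "0 \<le> 2*(F (real k + 1) - F (real k + g))"
      by auto
    have "0 \<le> b^k*b" using b by simp
    then show ?thesis using bk m1
      by (simp add: ennreal_mult[symmetric] ennreal_plus[symmetric] del: ennreal_plus)
  qed
  finally show ?thesis .
qed

lemma total_int:
  fixes F q :: "real \<Rightarrow> real"
  assumes b: "0 < b" "b < 1" and g: "0 < g" "g < 1"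
    and D: "\<And>x. (F has_real_derivative q x) (at x)"
    and odd: "\<And>x. F (-x) = - F x" and even: "\<And>x. q (-x) = q x"
    and nn: "\<And>x. 0 \<le> q x" and qm: "q \<in> borel_measurable borel"
    and R: "(\<lambda>k. b^k * (2*(F (real k + g) - F (real k))) + b^k*b*(2*(F (real k + 1) - F (real k + g)))) sums R"
  shows "(\<integral>\<^sup>+x. ennreal (q x * stair b g x) \<partial>lborel) = ennreal R"
proof -
  let ?S = "\<lambda>k::nat. {x. real k \<le> \<bar>x\<bar> \<and> \<bar>x\<bar> < real k + 1}"
  have pw: "ennreal (q x * stair b g x) = (\<Sum>k. ennreal (q x * stair b g x) * indicator (?S k) x)" for x
  proof -
    let ?k0 = "nat \<lfloor>\<bar>x\<bar>\<rfloor>"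
    have iff: "x \<in> ?S k \<longleftrightarrow> k = ?k0" for k
    proof -
      have "x \<in> ?S k \<longleftrightarrow> \<lfloor>\<bar>x\<bar>\<rfloor> = int k" by (simp add: floor_eq_iff)
      also have "\<dots> \<longleftrightarrow> k = ?k0" by auto
      finally show ?thesis .
    qed
    have "(\<lambda>k. ennreal (q x * stair b g x) * indicator (?S k) x) = (\<lambda>k. if k = ?k0 then ennreal (q x * stair b g x) else 0)"
      using iff by (auto simp: indicator_def)
    moreover have "(\<lambda>k. if k = ?k0 then ennreal (q x * stair b g x) else 0) sums ennreal (q x * stair b g x)"
      using sums_single[of ?k0 "\<lambda>_. ennreal (q x * stair b g x)"] by simp
    ultimately show ?thesis by (simp add: sums_iff)
  qed
  have meas: "(\<lambda>x. ennreal (q x * stair b g x) * indicator (?S k) x) \<in> borel_measurable lborel" for k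
    using qm by measurable
  have mono: "F u \<le> F v" if "u \<le> v" for u v
    using DERIV_nonneg_imp_nondecreasing[of u v F] that D nn by blast
  have tnn: "0 \<le> b^k * (2*(F (real k + g) - F (real k))) + b^k*b*(2*(F (real k + 1) - F (real k + g)))" for k
  proof -
    have "F (real k) \<le> F (real k + g)" by (rule mono) (use g in simp)
    moreover have "F (real k + g) \<le> F (real k + 1)" by (rule mono) (use g in simp)
    ultimately show ?thesis using b by (intro add_nonneg_nonneg mult_nonneg_nonneg) auto
  qed
  have "(\<integral>\<^sup>+x. ennreal (q x * stair b g x) \<partial>lborel) = (\<integral>\<^sup>+x. (\<Sum>k. ennreal (q x * stair b g x) * indicator (?S k) x) \<partial>lborel)"
    by (rule nn_integral_cong) (rule pw)
  also have "\<dots> = (\<Sum>k. (\<integral>\<^sup>+x. ennreal (q x * stair b g x) * indicator (?S k) x \<partial>lborel))"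
    by (rule nn_integral_suminf) (rule meas)
  also have "\<dots> = (\<Sum>k. ennreal (b^k * (2*(F (real k + g) - F (real k))) + b^k*b*(2*(F (real k + 1) - F (real k + g)))))"
    by (subst slice_int[OF b g D odd even nn qm]) (rule refl)
  also have "\<dots> = ennreal R"
    by (rule suminf_ennreal_eq[OF tnn R])
  finally show ?thesis .
qed

definition cA :: "real \<Rightarrow> real \<Rightarrow> real" where "cA b g = (1 - b) / (2 * (g + b * (1 - g)))"
definition dens :: "real \<Rightarrow> real \<Rightarrow> real \<Rightarrow> real" where "dens b g x = cA b g * stair b g x"
definition Vf :: "real \<Rightarrow> real \<Rightarrow> real" where
  "Vf b g = cA b g * (2/3) * (3 * (g + b*(1-g)) * (b * (1+b) / (1-b)^3) + 3 * (g^2 + b*(1-g^2)) * (b / (1-b)^2)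
      + (g^3 + b*(1-g^3)) * (1/(1-b)))"

lemma dens_total:
  assumes b: "0 < b" "b < 1" and g: "0 < g" "g < 1"
  shows "(\<integral>\<^sup>+x. ennreal (dens b g x) \<partial>lborel) = 1"
proof -
  have c1: "0 < g + b * (1 - g)" using b g by (simp add: add_pos_nonneg)
  have S: "(\<lambda>k. b^k * (2*((real k + g) - (real k))) + b^k*b*(2*((real k + 1) - (real k + g)))) sums (2 * (g + b*(1-g)) * (1/(1-b)))"
  proof -
    have "(\<lambda>k. (2 * (g + b*(1-g))) * b^k) sums (2 * (g + b*(1-g)) * (1/(1-b)))"
      using geometric_sums[of b] b by (intro sums_mult) simp
    moreover have "(\<lambda>k. (2 * (g + b*(1-g))) * b^k) = (\<lambda>k. b^k * (2*((real k + g) - (real k))) + b^k*b*(2*((real k + 1) - (real k + g))))"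
      by (auto simp: algebra_simps)
    ultimately show ?thesis by simp
  qed
  have T: "(\<integral>\<^sup>+x. ennreal ((\<lambda>x. 1) x * stair b g x) \<partial>lborel) = ennreal (2 * (g + b*(1-g)) * (1/(1-b)))"
    by (rule total_int[where F="\<lambda>x. x" and q="\<lambda>x. 1", OF b g _ _ _ _ _ S]) (auto intro!: derivative_eq_intros)
  have A: "0 \<le> cA b g" using b c1 by (simp add: cA_def)
  have "(\<integral>\<^sup>+x. ennreal (dens b g x) \<partial>lborel) = (\<integral>\<^sup>+x. ennreal (cA b g) * ennreal ((\<lambda>x. 1) x * stair b g x) \<partial>lborel)"
    by (intro nn_integral_cong) (simp add: dens_def ennreal_mult'[OF A, symmetric])
  also have "\<dots> = ennreal (cA b g) * (\<integral>\<^sup>+x. ennreal ((\<lambda>x. 1) x * stair b g x) \<partial>lborel)"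
    by (rule nn_integral_cmult) measurable
  also have "\<dots> = ennreal (cA b g) * ennreal (2 * (g + b*(1-g)) * (1/(1-b)))"
    by (simp only: T)
  also have "\<dots> = 1"
    using A b c1 by (simp add: ennreal_mult[symmetric] cA_def)
  finally show ?thesis .
qed

lemma dens_var:
  assumes b: "0 < b" "b < 1" and g: "0 < g" "g < 1"
  shows "(\<integral>\<^sup>+x. ennreal (x^2 * dens b g x) \<partial>lborel) = ennreal (Vf b g)"
proof -
  have c1: "0 < g + b * (1 - g)" using b g by (simp add: add_pos_nonneg)
  let ?V = "(2/3) * (3 * (g + b*(1-g)) * (b * (1+b) / (1-b)^3) + 3 * (g^2 + b*(1-g^2)) * (b / (1-b)^2)
      + (g^3 + b*(1-g^3)) * (1/(1-b)))"
  have S: "(\<lambda>k. b^k * (2*((real k + g)^3/3 - (real k)^3/3)) + b^k*b*(2*((real k + 1)^3/3 - (real k + g)^3/3))) sums ?V"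
  proof -
    have "(\<lambda>k. (2/3) * (3 * (g + b*(1-g)) * ((real k)^2 * b^k) + 3 * (g^2 + b*(1-g^2)) * (real k * b^k)
      + (g^3 + b*(1-g^3)) * b^k)) sums ?V"
      using geometric_sums[of b] b by (intro sums_mult sums_add sums1 sums2) auto
    moreover have "(\<lambda>k. (2/3) * (3 * (g + b*(1-g)) * ((real k)^2 * b^k) + 3 * (g^2 + b*(1-g^2)) * (real k * b^k)
      + (g^3 + b*(1-g^3)) * b^k)) = (\<lambda>k. b^k * (2*((real k + g)^3/3 - (real k)^3/3)) + b^k*b*(2*((real k + 1)^3/3 - (real k + g)^3/3)))"
      by (rule ext) (simp add: field_simps power3_eq_cube power2_eq_square)
    ultimately show ?thesis by simp
  qed
  have T: "(\<integral>\<^sup>+x. ennreal ((\<lambda>x. x^2) x * stair b g x) \<partial>lborel) = ennreal ?V"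
    by (rule total_int[where F="\<lambda>x. x^3/3" and q="\<lambda>x. x^2", OF b g _ _ _ _ _ S]) (auto intro!: derivative_eq_intros simp: power2_eq_square power3_eq_cube)
  have A: "0 \<le> cA b g" using b c1 by (simp add: cA_def)
  have "(\<integral>\<^sup>+x. ennreal (x^2 * dens b g x) \<partial>lborel) = (\<integral>\<^sup>+x. ennreal (cA b g) * ennreal ((\<lambda>x. x^2) x * stair b g x) \<partial>lborel)"
    by (intro nn_integral_cong) (simp add: dens_def ennreal_mult'[OF A, symmetric] mult_ac)
  also have "\<dots> = ennreal (cA b g) * (\<integral>\<^sup>+x. ennreal ((\<lambda>x. x^2) x * stair b g x) \<partial>lborel)"
    by (rule nn_integral_cmult) measurable
  also have "\<dots> = ennreal (cA b g) * ennreal ?V"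
    by (simp only: T)
  also have "\<dots> = ennreal (Vf b g)"
    by (simp only: ennreal_mult'[OF A, symmetric] Vf_def mult.assoc)
  finally show ?thesis .
qed

lemma alg1:
  fixes C D P Q R b :: real
  assumes "C \<noteq> 0" "D \<noteq> 0"
  shows "D / (2 * C) * (2/3) * (3 * C * (P / D^3) + 3 * Q * (b / D^2) + R * (1 / D))
    = P / D^2 + Q * b / (C * D) + R / (3 * C)"
  using assms by (simp add: field_simps power2_eq_square power3_eq_cube)

lemma Vf_alt:
  assumes b: "0 < b" "b < 1" and g: "0 < g" "g < 1"
  shows "Vf b g = b*(1+b)/(1-b)^2 + (g^2 + b*(1-g^2)) * b / ((g + b*(1-g)) * (1-b)) + (g^3 + b*(1-g^3)) / (3 * (g + b*(1-g)))"
proof -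
  have "0 < g + b * (1 - g)" using b g by (simp add: add_pos_nonneg)
  then have c1: "g + b * (1 - g) \<noteq> 0" by simp
  have nb: "1 - b \<noteq> 0" using b by simp
  show ?thesis unfolding Vf_def cA_def
    by (rule alg1[OF c1 nb])
qed

lemma alg2:
  fixes A B E D :: real
  assumes "D \<noteq> 0"
  shows "A / D^2 + B / D + E / 3 = (A + B * D + (E / 3) * D^2) / D^2"
  using assms by (simp add: field_simps power2_eq_square)

lemma poly_ineq:
  fixes t :: real assumes "0 < t" "t < 1"
  shows "t^3*(1+t^3) + 2*t^4*(1-t^3) + (2*t^2/3)*(1-t^3)^2 \<le> t^2*(1+t^2) + t^3"
proof -
  have a: "0 \<le> (1-t)^2*(1+2*t)" using assms by simp
  have q: "0 < 2 - 3*t + 4*t^2"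
  proof -
    have "2 - 3*t + 4*t^2 = 4*(t - 3/8)^2 + 23/16" by (simp add: power2_eq_square algebra_simps)
    moreover have "0 \<le> 4*(t - 3/8)^2" by simp
    ultimately show ?thesis by linarith
  qed
  have "0 \<le> 2*t^2*(1-t)" using assms by simp
  then have "0 \<le> 2 - 3*t + 4*t^2 + 2*t^2*(1-t)" using q by linarith
  then have c: "0 \<le> t^3 * (2 - 3*t + 4*t^2 + 2*t^2*(1-t))" using assms by simp
  have "0 \<le> (t^2/3) * ((1-t)^2*(1+2*t) + t^3 * (2 - 3*t + 4*t^2 + 2*t^2*(1-t)))"
    using a c by simp
  moreover have "(t^2/3) * ((1-t)^2*(1+2*t) + t^3 * (2 - 3*t + 4*t^2 + 2*t^2*(1-t)))
     = (t^2*(1+t^2) + t^3) - (t^3*(1+t^3) + 2*t^4*(1-t^3) + (2*t^2/3)*(1-t^3)^2)"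
    by (simp add: eval_nat_numeral algebra_simps)
  ultimately show ?thesis by linarith
qed

lemma V_le:
  fixes t :: real assumes t: "0 < t" "t < 1"
  shows "Vf (t^3) t \<le> (t^2*(1+t^2) + t^3) / (1-t^3)^2"
proof -
  have t3: "0 < t^3" "t^3 < 1" using t by (auto simp: power_less_one_iff)
  have t3t: "t^3 \<le> t" using t by (simp add: power_le_one_iff power_decreasing[of 1 3 t, simplified])
  have d: "0 < 1 - t^3" using t3 by simp
  let ?c1 = "t + t^3*(1-t)" and ?c2 = "t^2 + t^3*(1-t^2)" and ?c3 = "t^3 + t^3*(1-t^3)"
  have c1: "t \<le> ?c1" "0 < ?c1" using t t3 by (auto intro: add_pos_nonneg)
  have "?c2 \<le> 2*t*?c1"
  proof -
    have "0 \<le> t^2*(1-t) + t^4*(2-t)" using t by (intro add_nonneg_nonneg mult_nonneg_nonneg) auto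
    moreover have "2*t*?c1 - ?c2 = t^2*(1-t) + t^4*(2-t)" by (simp add: power2_eq_square power3_eq_cube power4_eq_xxxx algebra_simps)
    ultimately show ?thesis by linarith
  qed
  then have T2: "?c2 * t^3 / (?c1 * (1 - t^3)) \<le> 2*t^4/(1-t^3)"
  proof -
    have "?c2 * t^3 / (?c1 * (1 - t^3)) \<le> (2*t*?c1) * t^3 / (?c1 * (1 - t^3))"
      using \<open>?c2 \<le> 2*t*?c1\<close> t3 c1 d by (intro divide_right_mono mult_right_mono) auto
    also have "\<dots> = 2*t^4/(1-t^3)" using c1 by (simp add: power_def)
    finally show ?thesis .
  qed
  have T3: "?c3 / (3 * ?c1) \<le> 2*t^2/3"
  proof -
    have "?c3 \<le> 2*t^3" using t3 by (simp add: algebra_simps)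
    moreover have "0 \<le> ?c3" using t3 by (intro add_nonneg_nonneg mult_nonneg_nonneg) auto
    ultimately have "?c3 / (3 * ?c1) \<le> 2*t^3 / (3 * t)" using c1 t
      by (intro frac_le) auto
    also have "\<dots> = 2*t^2/3" using t by (simp add: power2_eq_square power3_eq_cube)
    finally show ?thesis .
  qed
  have "Vf (t^3) t = t^3*(1+t^3)/(1-t^3)^2 + ?c2 * t^3 / (?c1 * (1 - t^3)) + ?c3 / (3 * ?c1)"
    using Vf_alt[OF t3 t] by simp
  also have "\<dots> \<le> t^3*(1+t^3)/(1-t^3)^2 + 2*t^4/(1-t^3) + 2*t^2/3"
    using T2 T3 by linarith
  also have "\<dots> = (t^3*(1+t^3) + 2*t^4*(1-t^3) + (2*t^2/3)*(1-t^3)^2) / (1-t^3)^2"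
    using d by (intro alg2) simp
  also have "\<dots> \<le> (t^2*(1+t^2) + t^3) / (1-t^3)^2"
    using poly_ineq[OF t] d by (intro divide_right_mono) auto
  finally show ?thesis .
qed

lemma sigma_ge:
  assumes "0 < e"
  shows "(exp (-e/3)^2*(1+exp (-e/3)^2) + exp (-e/3)^3) / (1-exp (-e/3)^3)^2 \<le> sigma_star_sq e"
proof -
  let ?t = "exp (-e/3)"
  have e2: "exp (-2*e/3) = ?t^2" by (simp add: exp_of_nat_mult[symmetric])
  have e3: "exp (-e) = ?t^3" by (simp add: exp_of_nat_mult[symmetric])
  have p: "1 \<le> (2::real) powr (2/3)" by (rule ge_one_powr_ge_zero) auto
  have nn: "0 \<le> ?t^2*(1+?t^2)" by (intro mult_nonneg_nonneg add_nonneg_nonneg) auto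
  have "?t^2*(1+?t^2) \<le> 2 powr (2/3) * ?t^2*(1+?t^2)"
    using mult_right_mono[OF p nn] by (simp add: mult.assoc)
  then show ?thesis unfolding sigma_star_sq_def e2 e3
    by (intro divide_right_mono) auto
qed

lemma dp:
  assumes b: "0 < b" "b < 1" and g: "0 < g" "g < 1" and a: "\<bar>a0 - a1\<bar> \<le> 1" and B: "B \<in> sets borel"
  shows "emeasure (density lborel (\<lambda>x. ennreal (dens b g x))) {x. a0 + x \<in> B}
     \<le> ennreal (1/b) * emeasure (density lborel (\<lambda>x. ennreal (dens b g x))) {x. a1 + x \<in> B}"
proof -
  have c1: "0 < g + b * (1 - g)" using b g by (simp add: add_pos_nonneg)
  have A: "0 \<le> cA b g" using b c1 by (simp add: cA_def)
  have Bm[measurable]: "B \<in> sets borel" by (rule B)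
  have dm[measurable]: "dens b g \<in> borel_measurable borel" unfolding dens_def by measurable
  have shift: "emeasure (density lborel (\<lambda>x. ennreal (dens b g x))) {x. a + x \<in> B}
      = (\<integral>\<^sup>+y. ennreal (dens b g (y - a)) * indicator B y \<partial>lborel)" for a
  proof -
    have "emeasure (density lborel (\<lambda>x. ennreal (dens b g x))) {x. a + x \<in> B}
        = (\<integral>\<^sup>+x. ennreal (dens b g x) * indicator {x. a + x \<in> B} x \<partial>lborel)"
      using B by (subst emeasure_density) auto
    also have "\<dots> = (\<integral>\<^sup>+x. (\<lambda>y. ennreal (dens b g (y - a)) * indicator B y) (a + 1 * x) \<partial>lborel)"
      by (intro nn_integral_cong) (simp add: indicator_def)
    also have "\<dots> = (\<integral>\<^sup>+y. ennreal (dens b g (y - a)) * indicator B y \<partial>lborel)"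
      using B by (subst nn_integral_real_affine[where c=1 and t=a]) auto
    finally show ?thesis .
  qed
  have pw: "ennreal (dens b g (y - a0)) * indicator B y \<le> ennreal (1/b) * (ennreal (dens b g (y - a1)) * indicator B y)" for y
  proof -
    have "stair b g (y - a0) * b \<le> stair b g (y - a1)"
      using a by (intro stair_ratio[OF b _ g(2)]) auto
    then have "stair b g (y - a0) \<le> (1/b) * stair b g (y - a1)" using b by (simp add: field_simps)
    then have "dens b g (y - a0) \<le> (1/b) * dens b g (y - a1)"
      unfolding dens_def using A by (metis mult.left_commute mult_left_mono)
    then have "ennreal (dens b g (y - a0)) \<le> ennreal ((1/b) * dens b g (y - a1))"
      by (rule ennreal_leI)
    also have "\<dots> = ennreal (1/b) * ennreal (dens b g (y - a1))"
      using b by (intro ennreal_mult') simp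
    finally have "ennreal (dens b g (y - a0)) \<le> ennreal (1/b) * ennreal (dens b g (y - a1))" .
    then show ?thesis by (simp add: indicator_def)
  qed
  have "(\<integral>\<^sup>+y. ennreal (dens b g (y - a0)) * indicator B y \<partial>lborel)
     \<le> (\<integral>\<^sup>+y. ennreal (1/b) * (ennreal (dens b g (y - a1)) * indicator B y) \<partial>lborel)"
    by (intro nn_integral_mono pw)
  also have "\<dots> = ennreal (1/b) * (\<integral>\<^sup>+y. ennreal (dens b g (y - a1)) * indicator B y \<partial>lborel)"
    using B by (intro nn_integral_cmult) measurable
  finally show ?thesis by (simp only: shift)
qed

lemma Vcont:
  assumes "0 < e"
  shows "isCont (\<lambda>e. Vf (exp (-e)) (exp (-e/3))) e"
proof -
  have b: "exp (-e) < 1" using assms by simp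
  have g: "exp (-e/3) < 1" using assms by simp
  have "0 < exp (-e/3) + exp (-e) * (1 - exp (-e/3))" using g by (intro add_pos_nonneg) auto
  then have c: "2 * (exp (-e/3) + exp (-e) * (1 - exp (-e/3))) \<noteq> 0" by simp
  show ?thesis unfolding Vf_def cA_def using b c
    by (intro continuous_intros) auto
qed

theorem lemma2:
  fixes \<epsilon> \<sigma>2 :: real
  assumes "\<epsilon> > 0" and "\<sigma>2 > sigma_star_sq \<epsilon>"
  shows "\<exists>(M :: real measure) (N :: real \<Rightarrow> real) \<epsilon>bar.
           prob_space M \<and> N \<in> borel_measurable M \<and>
           (\<integral>\<^sup>+ \<omega>. ennreal ((N \<omega>)^2) \<partial>M) \<le> ennreal \<sigma>2 \<and>
           \<epsilon>bar < \<epsilon> \<and>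
           (\<forall>a0 a1 :: real. \<bar>a0 - a1\<bar> \<le> 1 \<longrightarrow>
              (\<forall>B \<in> sets borel.
                 measure M {\<omega> \<in> space M. a0 + N \<omega> \<in> B}
                   \<le> exp \<epsilon>bar * measure M {\<omega> \<in> space M. a1 + N \<omega> \<in> B}))"
proof -
  define V where "V = (\<lambda>e. Vf (exp (-e)) (exp (-e/3)))"
  have VE: "V \<epsilon> < \<sigma>2"
  proof -
    let ?t = "exp (-\<epsilon>/3)"
    have t: "0 < ?t" "?t < 1" using assms by auto
    have e3: "exp (-\<epsilon>) = ?t^3" by (simp add: exp_of_nat_mult[symmetric])
    have "V \<epsilon> = Vf (?t^3) ?t" by (simp add: V_def e3)
    also have "\<dots> \<le> (?t^2*(1+?t^2) + ?t^3) / (1-?t^3)^2" by (rule V_le[OF t])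
    also have "\<dots> \<le> sigma_star_sq \<epsilon>" by (rule sigma_ge) (rule assms(1))
    finally show ?thesis using assms(2) by linarith
  qed
  have "isCont V \<epsilon>" unfolding V_def by (rule Vcont) (rule assms(1))
  then have "(V \<longlongrightarrow> V \<epsilon>) (at \<epsilon>)" by (simp add: isCont_def)
  then have "eventually (\<lambda>e. V e < \<sigma>2) (at \<epsilon>)" using VE by (rule order_tendstoD(2))
  then have ev1: "eventually (\<lambda>e. V e < \<sigma>2) (at_left \<epsilon>)" by (simp add: eventually_at_split)
  have ev2: "eventually (\<lambda>e. e \<in> {0<..<\<epsilon>}) (at_left \<epsilon>)" using assms(1) by (rule eventually_at_left_real)
  have "\<exists>e. V e < \<sigma>2 \<and> e \<in> {0<..<\<epsilon>}"
    by (rule eventually_happens'[OF _ eventually_conj[OF ev1 ev2]]) simp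
  then obtain e where Ve: "V e < \<sigma>2" and e: "0 < e" "e < \<epsilon>" by auto
  define b where "b = exp (-e)"
  define g where "g = exp (-e/3)"
  have b: "0 < b" "b < 1" using e by (auto simp: b_def)
  have g: "0 < g" "g < 1" using e by (auto simp: g_def)
  have c1: "0 < g + b * (1 - g)" using b g by (simp add: add_pos_nonneg)
  have A: "0 \<le> cA b g" using b c1 by (simp add: cA_def)
  have dm[measurable]: "dens b g \<in> borel_measurable borel" unfolding dens_def by measurable
  define M where "M = density lborel (\<lambda>x. ennreal (dens b g x))"
  have spM: "space M = UNIV" by (simp add: M_def)
  have setsM: "sets M = sets borel" by (simp add: M_def)
  have PM: "prob_space M"
  proof (rule prob_spaceI)
    show "emeasure M (space M) = 1"
      unfolding M_def using dens_total[OF b g] by (simp add: emeasure_density)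
  qed
  have NM: "(\<lambda>x. x) \<in> borel_measurable M"
    by (subst measurable_cong_sets[OF setsM refl]) simp
  have var: "(\<integral>\<^sup>+ \<omega>. ennreal (\<omega>^2) \<partial>M) \<le> ennreal \<sigma>2"
  proof -
    have "(\<integral>\<^sup>+ \<omega>. ennreal (\<omega>^2) \<partial>M) = (\<integral>\<^sup>+ x. ennreal (dens b g x) * ennreal (x^2) \<partial>lborel)"
      unfolding M_def by (rule nn_integral_density) measurable
    also have "\<dots> = (\<integral>\<^sup>+ x. ennreal (x^2 * dens b g x) \<partial>lborel)"
    proof (rule nn_integral_cong)
      fix x
      have "0 \<le> stair b g x" using b by (simp add: stair_def)
      then have "0 \<le> dens b g x" using A by (simp add: dens_def)
      then show "ennreal (dens b g x) * ennreal (x^2) = ennreal (x^2 * dens b g x)"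
        by (simp add: ennreal_mult'[symmetric] mult.commute)
    qed
    also have "\<dots> = ennreal (Vf b g)" by (rule dens_var[OF b g])
    also have "\<dots> \<le> ennreal \<sigma>2" using Ve by (simp add: V_def b_def g_def ennreal_leI)
    finally show ?thesis .
  qed
  have dpM: "measure M {\<omega> \<in> space M. a0 + \<omega> \<in> B} \<le> exp e * measure M {\<omega> \<in> space M. a1 + \<omega> \<in> B}"
    if a: "\<bar>a0 - a1\<bar> \<le> 1" and B: "B \<in> sets borel" for a0 a1 B
  proof -
    interpret prob_space M by (rule PM)
    have "ennreal (measure M {x. a0 + x \<in> B}) = emeasure M {x. a0 + x \<in> B}"
      by (simp add: emeasure_eq_measure)
    also have "\<dots> \<le> ennreal (1/b) * emeasure M {x. a1 + x \<in> B}"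
      unfolding M_def by (rule dp[OF b g a B])
    also have "\<dots> = ennreal (1/b) * ennreal (measure M {x. a1 + x \<in> B})"
      by (simp add: emeasure_eq_measure)
    also have "\<dots> = ennreal (exp e * measure M {x. a1 + x \<in> B})"
      by (simp add: b_def ennreal_mult'[symmetric] exp_minus field_simps)
    finally have "measure M {x. a0 + x \<in> B} \<le> exp e * measure M {x. a1 + x \<in> B}"
      by (rule ennreal_le_iff[THEN iffD1, rotated]) simp
    then show ?thesis by (simp add: spM)
  qed
  show ?thesis
    by (rule exI[of _ M], rule exI[of _ "\<lambda>x. x"], rule exI[of _ e]) (use PM NM var e dpM in auto)
qed

end
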